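(* For $n \ge 2$, if $n \pmod 6 \in \{2,4\}$, then the path $P_n$ is $\gamma_{\rm tg}$-critical.
   Context: Total domination game: Dominator and Staller alternately choose vertices, each chosen vertex must be adjacent to some vertex not yet totally dominated; the game ends when no legal move exists; Dominator minimizes, Staller maximizes the number of moves; $\gamma_{\rm tg}(G)$ is the number of moves in the Dominator-start game under optimal play. $G|v$ is $G$ with $v$ declared already totally dominated, with $\gamma_{\rm tg}(G|v)$ defined analogously. $G$ is $\gamma_{\rm tg}$-critical if $\gamma_{\rm tg}(G|v)<\gamma_{\rm tg}(G)$ for all vertices $v$. *)

theory Defs
  imports Main
begin

text \<open>A graph is given by a finite vertex set V and a symmetric irreflexive
adjacency relation E. The open neighbourhood of v is the set of neighbours of v in V.\<close>

definition open_nbhd :: "'a set \<Rightarrow> ('a \<Rightarrow> 'a \<Rightarrow> bool) \<Rightarrow> 'a \<Rightarrow> 'a set" where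
  "open_nbhd V E v = {u \<in> V. E v u}"

text \<open>State of the total domination game: the set T of vertices already totally
dominated.\<close>

definition tdg_legal :: "'a set \<Rightarrow> ('a \<Rightarrow> 'a \<Rightarrow> bool) \<Rightarrow> 'a set \<Rightarrow> 'a \<Rightarrow> bool" where
  "tdg_legal V E T v \<longleftrightarrow> v \<in> V \<and> \<not> open_nbhd V E v \<subseteq> T"

text \<open>Number of remaining moves under optimal play, with a fuel bound k and a flag
saying whether Dominator (True) or Staller (False) is to move. Every legal move
strictly enlarges T \<inter> V, so with fuel card V the value is exact.\<close>

fun tdg_val :: "'a set \<Rightarrow> ('a \<Rightarrow> 'a \<Rightarrow> bool) \<Rightarrow> nat \<Rightarrow> bool \<Rightarrow> 'a set \<Rightarrow> nat" where
  "tdg_val V E 0 d T = 0"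
| "tdg_val V E (Suc k) d T =
     (if {v. tdg_legal V E T v} = {} then 0
      else if d then Min ((\<lambda>v. Suc (tdg_val V E k False (T \<union> open_nbhd V E v))) ` {v. tdg_legal V E T v})
      else Max ((\<lambda>v. Suc (tdg_val V E k True (T \<union> open_nbhd V E v))) ` {v. tdg_legal V E T v}))"

definition gamma_tg :: "'a set \<Rightarrow> ('a \<Rightarrow> 'a \<Rightarrow> bool) \<Rightarrow> nat" where
  "gamma_tg V E = tdg_val V E (card V) True {}"

text \<open>gamma_tg(G|v): same game, but v is declared already totally dominated.\<close>
definition gamma_tg_pd :: "'a set \<Rightarrow> ('a \<Rightarrow> 'a \<Rightarrow> bool) \<Rightarrow> 'a \<Rightarrow> nat" where
  "gamma_tg_pd V E v = tdg_val V E (card V) True {v}"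

definition tg_critical :: "'a set \<Rightarrow> ('a \<Rightarrow> 'a \<Rightarrow> bool) \<Rightarrow> bool" where
  "tg_critical V E \<longleftrightarrow> (\<forall>v\<in>V. gamma_tg_pd V E v < gamma_tg V E)"

definition path_adj :: "nat \<Rightarrow> nat \<Rightarrow> bool" where
  "path_adj i j \<longleftrightarrow> i + 1 = j \<or> j + 1 = i"

end

theory Submission
  imports Defs
begin


fun dd :: "nat set \<Rightarrow> nat \<Rightarrow> nat" where
  "dd U 0 = (if 0 \<in> U then 1 else 0)"
| "dd U (Suc 0) = (if Suc 0 \<in> U then 1 else 0)"
| "dd U (Suc (Suc x)) = (if Suc (Suc x) \<in> U then Suc (dd U x) else 0)"

lemma dd_eq: "dd U y = (if y \<in> U then Suc (if 2 \<le> y then dd U (y-2) else 0) else 0)"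
  by (induction U y rule: dd.induct) auto

definition ends :: "nat set \<Rightarrow> nat set" where "ends U = {e \<in> U. e + 2 \<notin> U}"
definition Phi :: "(nat \<Rightarrow> nat) \<Rightarrow> nat set \<Rightarrow> nat" where
  "Phi f U = (\<Sum>e\<in>ends U. f (dd U e))"

lemma dd_notin: "y \<notin> U \<Longrightarrow> dd U y = 0"
  by (subst dd_eq) simp

lemma dd_in: "y \<in> U \<Longrightarrow> dd U y = Suc (if 2 \<le> y then dd U (y-2) else 0)"
  by (subst dd_eq) simp

lemma dd_up: "(\<forall>t. 1 \<le> t \<and> t \<le> k \<longrightarrow> y + 2*t \<in> U) \<Longrightarrow> dd U (y + 2*k) = k + dd U y"
proof (induction k)
  case 0 then show ?case by simp
next
  case (Suc k)
  have "y + 2 * Suc k \<in> U" using Suc.prems by auto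
  then have "dd U (y + 2 * Suc k) = Suc (dd U (y + 2*k))"
    by (subst dd_in) auto
  then show ?case using Suc by auto
qed

lemma dd_other: "\<not>(x \<le> y \<and> even (y - x)) \<Longrightarrow> dd (U - {x}) y = dd U y"
proof (induction y rule: less_induct)
  case (less y)
  have yx: "y \<noteq> x" using less.prems by auto
  show ?case
  proof (cases "2 \<le> y")
    case True
    have "\<not>(x \<le> y - 2 \<and> even (y - 2 - x))" using less.prems True
      by presburger
    then have "dd (U - {x}) (y-2) = dd U (y-2)" using less.IH True by auto
    then show ?thesis using yx by (simp add: dd_eq[of "U - {x}" y] dd_eq[of U y])
  next
    case False
    then show ?thesis using yx by (simp add: dd_eq[of "U - {x}" y] dd_eq[of U y])
  qed
qed

lemma dd_above: "z \<notin> U \<Longrightarrow> x < z \<Longrightarrow> z \<le> y \<Longrightarrow> even (y - z) \<Longrightarrow> dd (U - {x}) y = dd U y"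
proof (induction y rule: less_induct)
  case (less y)
  show ?case
  proof (cases "y = z")
    case True then show ?thesis using less.prems by (simp add: dd_notin)
  next
    case False
    then have y2: "z \<le> y - 2" "2 \<le> y" using less.prems by presburger+
    have "even (y - 2 - z)" using less.prems y2 by (auto simp: dvd_diff_nat)
    then have "dd (U - {x}) (y-2) = dd U (y-2)" using less.IH less.prems y2 by auto
    moreover have "y \<noteq> x" using less.prems by auto
    ultimately show ?thesis using y2 by (simp add: dd_eq[of "U - {x}" y] dd_eq[of U y])
  qed
qed


lemma ends_finite: "finite U \<Longrightarrow> finite (ends U)"
  unfolding ends_def by auto

lemma remove_one:
  assumes fin: "finite U" and xU: "x \<in> U"
    and hj: "\<forall>t\<le>j. x + 2*t \<in> U" and hj2: "x + 2*(j+1) \<notin> U" and f0: "f 0 = 0"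
  shows "Phi f (U - {x}) + f (dd U x + j) = Phi f U + f (dd U x - 1) + f j"
proof -
  define e where "e = x + 2*j"
  define U' where "U' = U - {x}"
  define Oth where "Oth = ends U - {x, e}"
  define W where "W = (if 2 \<le> x \<and> x - 2 \<in> U then {x-2} else {})"
  have eE: "e \<in> ends U" using hj hj2 unfolding e_def ends_def by (auto simp: algebra_simps)
  have ddUe: "dd U e = j + dd U x" unfolding e_def by (rule dd_up) (use hj in auto)
  have ddU'x: "dd U' x = 0" unfolding U'_def by (simp add: dd_notin)
  have ddU'e: "dd U' e = j" unfolding e_def
    using dd_up[of j x U'] hj ddU'x unfolding U'_def by auto
  have Oeq: "dd U' e' = dd U e'" if "e' \<in> Oth" for e'
  proof (cases "x \<le> e' \<and> even (e' - x)")
    case False then show ?thesis unfolding U'_def by (rule dd_other)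
  next
    case True
    then obtain t where t: "e' = x + 2*t" by (metis dvd_def le_add_diff_inverse)
    have "e' \<in> ends U" "e' \<noteq> e" "e' \<noteq> x" using that unfolding Oth_def by auto
    show ?thesis
    proof (cases "t \<le> j")
      case True
      then have "t < j" using \<open>e' \<noteq> e\<close> t unfolding e_def by auto
      then have "e' + 2 \<in> U" using hj t by (metis Suc_leI add.assoc mult_Suc_right add_2_eq_Suc' add.commute)
      then show ?thesis using \<open>e' \<in> ends U\<close> unfolding ends_def by auto
    next
      case False
      show ?thesis unfolding U'_def
        by (rule dd_above[OF hj2]) (use False t in \<open>auto simp: algebra_simps\<close>)
    qed
  qed
  have endsU': "ends U' = (ends U - {x}) \<union> W"
    unfolding ends_def U'_def W_def by auto
  have disj: "(ends U - {x}) \<inter> W = {}"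
  proof -
    have "2 \<le> x \<Longrightarrow> x - 2 + 2 = x" by simp
    then show ?thesis using xU unfolding W_def ends_def by auto
  qed
  have finE: "finite (ends U)" using fin by (rule ends_finite)
  have s1: "Phi f U' = (\<Sum>e'\<in>ends U - {x}. f (dd U' e')) + (\<Sum>e'\<in>W. f (dd U' e'))"
    unfolding Phi_def endsU' using finE disj by (simp add: W_def sum.union_disjoint)
  have s2: "(\<Sum>e'\<in>ends U - {x}. f (dd U' e')) = f j + (\<Sum>e'\<in>Oth. f (dd U e'))"
  proof (cases "j = 0")
    case True
    then have "ends U - {x} = Oth" unfolding Oth_def e_def by auto
    then show ?thesis using True f0 Oeq by (auto intro: sum.cong)
  next
    case False
    then have "ends U - {x} = insert e Oth" "e \<notin> Oth" using eE unfolding Oth_def e_def by auto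
    then show ?thesis using ddU'e Oeq finE unfolding Oth_def by (auto intro: sum.cong)
  qed
  have s3: "(\<Sum>e'\<in>W. f (dd U' e')) = f (dd U x - 1)"
  proof (cases "2 \<le> x \<and> x - 2 \<in> U")
    case True
    have "dd U' (x-2) = dd U (x-2)" unfolding U'_def by (rule dd_other) (use True in auto)
    moreover have "dd U x = Suc (dd U (x-2))" using xU True by (simp add: dd_in)
    ultimately show ?thesis using True unfolding W_def by simp
  next
    case False
    then have "dd U x = 1" using xU by (auto simp: dd_in dd_notin)
    then show ?thesis using False f0 unfolding W_def by auto
  qed
  have s4: "Phi f U = f (dd U e) + (\<Sum>e'\<in>Oth. f (dd U e'))"
  proof -
    have "j > 0 \<Longrightarrow> x \<notin> ends U" using hj[rule_format, of 1] unfolding ends_def by auto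
    then have "ends U = insert e Oth" "e \<notin> Oth" using eE unfolding Oth_def by (auto simp: e_def)
    then have eq: "ends U = insert e Oth" and nin: "e \<notin> Oth" by auto
    have fo: "finite Oth" using finE unfolding Oth_def by simp
    show ?thesis unfolding Phi_def by (subst eq) (simp add: fo nin)
  qed
  show ?thesis using s1 s2 s3 s4 ddUe unfolding U'_def by (simp add: add.commute)
qed

definition bf :: "nat \<Rightarrow> nat" where "bf L = 2*(L div 3) + (if L mod 3 = 0 then 0 else 1)"
definition qf :: "nat \<Rightarrow> nat" where "qf L = (if L mod 3 = 2 then 1 else 0)"

lemma bf_form: "bf (3*p + r) = 2*p + bf r" "qf (3*p + r) = qf r"
  unfolding bf_def qf_def by simp_all

lemma bfn: "bf 0 = 0" "bf 1 = 1" "bf 2 = 1" "bf 3 = 2" "bf 4 = 3" "bf 5 = 3" "bf 6 = 4"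
  "qf 0 = 0" "qf 1 = 0" "qf 2 = 1" "qf 3 = 0" "qf 4 = 0" "qf 5 = 1" "qf 6 = 0"
  by (simp_all add: bf_def qf_def)

lemma lt3: "x < (3::nat) \<Longrightarrow> x = 0 \<or> x = 1 \<or> x = 2" by auto

definition DC :: "nat \<Rightarrow> nat \<Rightarrow> nat \<Rightarrow> nat \<Rightarrow> bool" where
  "DC B B' Q Q' \<longleftrightarrow> (B' + 1 = B \<and> Q' = Q + 1) \<or> (B' + 1 = B \<and> Q' = Q) \<or> (B' + 1 = B \<and> Q' + 1 = Q)
     \<or> (B' = B \<and> Q' + 1 = Q)
     \<or> (B' + 2 = B \<and> Q' = Q + 1) \<or> (B' + 2 = B \<and> Q' = Q + 2)"

lemma fin_pair: "x < 3 \<Longrightarrow> y < 3 \<Longrightarrow> B' + bf (x+y+2) = B + bf x + bf y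
   \<Longrightarrow> Q' + qf (x+y+2) = Q + qf x + qf y \<Longrightarrow> DC B B' Q Q'"
  by (drule lt3)+ (elim disjE; simp add: bf_def qf_def DC_def)

lemma fin_single: "x < 3 \<Longrightarrow> B' + bf (x+1) = B + bf x
   \<Longrightarrow> Q' + qf (x+1) = Q + qf x \<Longrightarrow> DC B B' Q Q'"
  by (drule lt3) (elim disjE; simp add: bf_def qf_def DC_def)

lemma delta_cases:
  assumes "B' + bf L = B + bf a + bf c" "Q' + qf L = Q + qf a + qf c"
    "L = a + c + 2 \<or> (L = a + c + 1 \<and> (a = 0 \<or> c = 0))"
  shows "DC B B' Q Q'"
proof -
  define p x s y where "p = a div 3" "x = a mod 3" "s = c div 3" "y = c mod 3"
  have a: "a = 3*p + x" and c: "c = 3*s + y" and r: "x < 3" "y < 3" unfolding p_x_s_y_def by simp_all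
  from assms(3) show ?thesis
  proof (elim disjE conjE)
    assume L: "L = a + c + 2"
    then have L': "L = 3*(p+s) + (x+y+2)" using a c by simp
    have e: "bf L = 2*(p+s) + bf (x+y+2)" "qf L = qf (x+y+2)" "bf a = 2*p + bf x" "qf a = qf x"
      "bf c = 2*s + bf y" "qf c = qf y" by (simp_all only: L' a c bf_form)
    have h1: "B' + bf (x+y+2) = B + bf x + bf y" using assms(1) unfolding e by simp
    have h2: "Q' + qf (x+y+2) = Q + qf x + qf y" using assms(2) unfolding e .
    show ?thesis by (rule fin_pair[OF r h1 h2])
  next
    assume L: "L = a + c + 1" "a = 0"
    then have L': "L = 3*s + (y+1)" using a c by simp_all
    have e: "bf L = 2*s + bf (y+1)" "qf L = qf (y+1)" "bf a = 0" "qf a = 0"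
      "bf c = 2*s + bf y" "qf c = qf y" by (simp_all only: L' L(2) c bf_form bfn)
    have h1: "B' + bf (y+1) = B + bf y" using assms(1) unfolding e by simp
    have h2: "Q' + qf (y+1) = Q + qf y" using assms(2) unfolding e by simp
    show ?thesis by (rule fin_single[OF r(2) h1 h2])
  next
    assume L: "L = a + c + 1" "c = 0"
    then have L': "L = 3*p + (x+1)" using a c by simp_all
    have e: "bf L = 2*p + bf (x+1)" "qf L = qf (x+1)" "bf c = 0" "qf c = 0"
      "bf a = 2*p + bf x" "qf a = qf x" by (simp_all only: L' L(2) a bf_form bfn)
    have h1: "B' + bf (x+1) = B + bf x" using assms(1) unfolding e by simp
    have h2: "Q' + qf (x+1) = Q + qf x" using assms(2) unfolding e by simp
    show ?thesis by (rule fin_single[OF r(1) h1 h2])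
  qed
qed

lemma AR1:
  assumes "B' + bf L = B + bf a + bf c" "Q' + qf L = Q + qf a + qf c"
    "L = a + c + 2 \<or> (L = a + c + 1 \<and> (a = 0 \<or> c = 0))"
  shows "B + Q div 2 \<le> Suc (B' + (Q'+1) div 2)" "Suc (B' + Q' div 2) \<le> B + (Q+1) div 2"
  using delta_cases[OF assms] unfolding DC_def by (elim disjE conjE; simp; presburger)+

lemma bf_form2: "bf (3*p + x + k) = 2*p + bf (x + k)" "qf (3*p + x + k) = qf (x + k)"
  using bf_form[of p "x+k"] by (simp_all add: add.assoc)

lemma AR_S:
  assumes "B' + bf L = B + bf (L - 1) + bf 0" "Q' + qf L = Q + qf (L-1) + qf 0" "L \<ge> 1"
    "Q > 0 \<longrightarrow> qf L = 1"
  shows "B + (Q+1) div 2 \<le> Suc (B' + Q' div 2)"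
proof -
  define p x where "p = (L-1) div 3" "x = (L-1) mod 3"
  have K: "L - 1 = 3*p + x" "x < 3" unfolding p_x_def by simp_all
  have L: "L = 3*p + x + 1" using K assms(3) by simp
  have h1: "B' + bf (x+1) = B + bf x" using assms(1) unfolding L bf_form2 by (simp add: bfn bf_form)
  have h2: "Q' + qf (x+1) = Q + qf x" using assms(2) unfolding L bf_form2 by (simp add: bfn bf_form)
  have h3: "Q > 0 \<longrightarrow> qf (x+1) = 1" using assms(4) unfolding L bf_form2 .
  from lt3[OF K(2)] show ?thesis
  proof (elim disjE)
    assume "x = 0" then have "B = B' + 1" "Q' = Q" "Q = 0" using h1 h2 h3 by (simp_all add: bf_def qf_def)
    then show ?thesis by simp
  next
    assume "x = 1" then have "B = B'" "Q = Q' + 1" using h1 h2 h3 by (simp_all add: bf_def qf_def)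
    then show ?thesis by presburger
  next
    assume "x = 2" then have "B = B' + 1" "Q' = Q + 1" "Q = 0" using h1 h2 h3 by (simp_all add: bf_def qf_def)
    then show ?thesis by simp
  qed
qed

lemma AR_D:
  assumes "B' + bf L = B + bf a + bf 0" "Q' + qf L = Q + qf a + qf 0"
    "(L \<ge> 2 \<and> a = L - 2) \<or> (L = 1 \<and> a = 0)"
    "odd Q \<longrightarrow> qf L = 1"
  shows "Suc (B' + (Q'+1) div 2) \<le> B + Q div 2"
  using assms(3)
proof (elim disjE conjE)
  assume "L = 1" "a = 0"
  then show ?thesis using assms(1,2,4) by (simp add: bf_def qf_def; presburger)
next
  assume La: "2 \<le> L" "a = L - 2"
  define p x where "p = a div 3" "x = a mod 3"
  have K: "a = 3*p + x" "x < 3" unfolding p_x_def by simp_all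
  have L: "L = 3*p + x + 2" using K La by simp
  have h1: "B' + bf (x+2) = B + bf x" using assms(1) unfolding L bf_form2 K(1) by (simp add: bfn bf_form)
  have h2: "Q' + qf (x+2) = Q + qf x" using assms(2) unfolding L bf_form2 K(1) by (simp add: bfn bf_form)
  have h3: "odd Q \<longrightarrow> qf (x+2) = 1" using assms(4) unfolding L bf_form2 .
  from lt3[OF K(2)] show ?thesis
  proof (elim disjE)
    assume "x = 0" then show ?thesis using h1 h2 h3 by (simp add: bf_def qf_def)
  next
    assume "x = 1" then have "B = B' + 1" "Q' = Q" "even Q" using h1 h2 h3 by (simp_all add: bf_def qf_def)
    then show ?thesis by presburger
  next
    assume "x = 2" then have "B = B' + 2" "Q' = Q + 1" using h1 h2 h3 by (simp_all add: bf_def qf_def)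
    then show ?thesis by presburger
  qed
qed

lemma AR_final:
  assumes "B' + bf m = 2 * bf m + bf a + bf c" "Q' + qf m = 2 * qf m + qf a + qf c"
    "a + c + 1 = m" "m mod 3 = 1 \<or> m mod 3 = 2"
  shows "B' + Q' div 2 < 2 * bf m + (2 * qf m) div 2"
proof -
  define p x s y where "p = a div 3" "x = a mod 3" "s = c div 3" "y = c mod 3"
  have a: "a = 3*p + x" and c: "c = 3*s + y" and r: "x < 3" "y < 3" unfolding p_x_s_y_def by simp_all
  have m: "m = 3*(p+s) + (x+y+1)" using a c assms(3) by simp
  have e: "bf m = 2*(p+s) + bf (x+y+1)" "qf m = qf (x+y+1)" "bf a = 2*p + bf x" "qf a = qf x"
      "bf c = 2*s + bf y" "qf c = qf y" by (simp_all only: m a c bf_form)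
  have "m mod 3 = (x+y+1) mod 3" using m by presburger
  then have mm: "(x+y+1) mod 3 = 1 \<or> (x+y+1) mod 3 = 2" using assms(4) by simp
  have h1: "B' = bf (x+y+1) + bf x + bf y + 4*(p+s)" using assms(1) unfolding e by simp
  have h2: "Q' = qf (x+y+1) + qf x + qf y" using assms(2) unfolding e by simp
  have "bf x + bf y + (qf (x+y+1) + qf x + qf y) div 2 < bf (x+y+1) + qf (x+y+1)"
    using lt3[OF r(1)] lt3[OF r(2)] mm by (elim disjE) (simp_all add: bf_def qf_def)
  then show ?thesis unfolding h1 h2 e by simp
qed


lemma exists_j:
  fixes U :: "nat set"
  assumes "finite U" "y \<in> U"
  shows "\<exists>j. (\<forall>t\<le>j. y + 2*t \<in> U) \<and> y + 2*(j+1) \<notin> U"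
proof -
  have ex: "\<exists>k. y + 2*k \<notin> U"
  proof
    show "y + 2 * Suc (Max U) \<notin> U"
      using Max_ge[OF assms(1)] by (metis Suc_le_lessD le_add2 mult_2 not_less trans_le_add1 add.commute add_Suc_right le_add1 less_le_trans)
  qed
  define k0 where "k0 = (LEAST k. y + 2*k \<notin> U)"
  have k0: "y + 2*k0 \<notin> U" unfolding k0_def by (rule LeastI_ex[OF ex])
  have lt: "t < k0 \<Longrightarrow> y + 2*t \<in> U" for t unfolding k0_def using not_less_Least by blast
  have "k0 \<noteq> 0" using k0 assms(2) by (cases k0) auto
  then show ?thesis using k0 lt by (intro exI[of _ "k0 - 1"]) auto
qed

lemma dd_pos: "y \<in> U \<Longrightarrow> dd U y \<ge> 1"
  by (simp add: dd_in)

lemma dd_chain: "t < dd U y \<Longrightarrow> 2*t \<le> y \<and> y - 2*t \<in> U \<and> dd U (y - 2*t) = dd U y - t"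
proof (induction t)
  case 0
  then show ?case by (cases "y \<in> U") (auto simp: dd_notin)
next
  case (Suc t)
  then have IH: "2*t \<le> y" "y - 2*t \<in> U" "dd U (y - 2*t) = dd U y - t" by auto
  define z where "z = y - 2*t"
  have "dd U z \<ge> 2" using Suc.prems IH unfolding z_def by simp
  moreover have "dd U z = Suc (if 2 \<le> z then dd U (z-2) else 0)" using IH unfolding z_def by (simp add: dd_in)
  ultimately have z2: "2 \<le> z" "dd U (z-2) = dd U z - 1" by (auto split: if_splits)
  then have "z - 2 \<in> U" using \<open>dd U z \<ge> 2\<close> by (cases "z-2 \<in> U") (auto simp: dd_notin)
  moreover have "z - 2 = y - 2 * Suc t" "2 * Suc t \<le> y" using z2 IH unfolding z_def by auto
  ultimately show ?case using z2 IH unfolding z_def by auto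
qed

lemma dd_break: "0 < dd U y \<Longrightarrow> 2 * dd U y \<le> y \<Longrightarrow> y - 2 * dd U y \<notin> U"
proof -
  assume a: "0 < dd U y" "2 * dd U y \<le> y"
  define k where "k = dd U y"
  define z where "z = y - 2*(k-1)"
  have c: "z \<in> U" "dd U z = 1" using dd_chain[of "k-1" U y] a unfolding z_def k_def by auto
  have z2: "2 \<le> z" using a unfolding z_def k_def by auto
  have "dd U (z-2) = 0" using c z2 by (simp add: dd_in)
  moreover have "z - 2 = y - 2 * k" using a unfolding z_def k_def by auto
  ultimately show ?thesis using dd_pos unfolding k_def by fastforce
qed

lemma move_left:
  assumes "finite U" "1 \<le> v" "v - 1 \<in> U" "v + 1 \<notin> U" "f 0 = 0"
  shows "Phi f (U - {v-1, v+1}) + f (dd U (v-1)) = Phi f U + f (dd U (v-1) - 1)"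
proof -
  have "Phi f (U - {v-1}) + f (dd U (v-1) + 0) = Phi f U + f (dd U (v-1) - 1) + f 0"
    by (rule remove_one) (use assms in auto)
  moreover have "U - {v-1, v+1} = U - {v-1}" using assms by auto
  ultimately show ?thesis using assms by simp
qed

lemma move_right:
  assumes "finite U" "1 \<le> v" "v - 1 \<notin> U" "\<forall>t\<le>j. v + 1 + 2*t \<in> U" "v + 1 + 2*(j+1) \<notin> U" "f 0 = 0"
  shows "Phi f (U - {v-1, v+1}) + f (1 + j) = Phi f U + f j"
proof -
  have in1: "v + 1 \<in> U" using assms(4) by (metis add_0_right le0 mult_0_right)
  have d1: "dd U (v+1) = 1" using in1 assms(3) by (simp add: dd_in dd_notin)
  have "Phi f (U - {v+1}) + f (dd U (v+1) + j) = Phi f U + f (dd U (v+1) - 1) + f j"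
    by (rule remove_one) (use assms in1 in auto)
  moreover have "U - {v-1, v+1} = U - {v+1}" using assms by auto
  ultimately show ?thesis using assms d1 by (simp add: add.commute)
qed

lemma move_both:
  assumes fin: "finite U" and v: "1 \<le> v" and l: "v - 1 \<in> U"
    and hj: "\<forall>t\<le>j. v + 1 + 2*t \<in> U" and hj2: "v + 1 + 2*(j+1) \<notin> U" and f0: "f 0 = 0"
  shows "Phi f (U - {v-1, v+1}) + f (dd U (v-1) + j + 1) = Phi f U + f (dd U (v-1) - 1) + f j"
proof -
  have a1: "\<forall>t\<le>j+1. v - 1 + 2*t \<in> U"
  proof (intro allI impI)
    fix t assume "t \<le> j + 1"
    show "v - 1 + 2*t \<in> U"
    proof (cases t)
      case 0 then show ?thesis using l by simp
    next
      case (Suc t')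
      then have "v - 1 + 2*t = v + 1 + 2*t'" using v by simp
      then show ?thesis using hj \<open>t \<le> j+1\<close> Suc by auto
    qed
  qed
  have a2: "v - 1 + 2*(j+1+1) \<notin> U" using hj2 v by (simp add: algebra_simps)
  have r1: "Phi f (U - {v-1}) + f (dd U (v-1) + (j+1)) = Phi f U + f (dd U (v-1) - 1) + f (j+1)"
    by (rule remove_one[where j="j+1" and x="v-1" and U=U and f=f, OF fin l a1 a2 f0])
  define U1 where "U1 = U - {v-1}"
  have fin1: "finite U1" using fin unfolding U1_def by simp
  have "v + 1 \<in> U" using hj[rule_format, of 0] by simp
  then have in1: "v + 1 \<in> U1" unfolding U1_def by simp
  have d1: "dd U1 (v+1) = 1" using in1 v by (simp add: dd_in dd_notin U1_def)
  have b1: "\<forall>t\<le>j. v + 1 + 2*t \<in> U1" using hj v unfolding U1_def by auto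
  have b2: "v + 1 + 2*(j+1) \<notin> U1" using hj2 unfolding U1_def by auto
  have r2: "Phi f (U1 - {v+1}) + f (dd U1 (v+1) + j) = Phi f U1 + f (dd U1 (v+1) - 1) + f j"
    by (rule remove_one[where j=j and x="v+1" and U=U1 and f=f, OF fin1 in1 b1 b2 f0])
  have "U1 - {v+1} = U - {v-1, v+1}" unfolding U1_def by auto
  then show ?thesis using r1 r2 d1 f0 unfolding U1_def by (simp add: algebra_simps)
qed

lemma move_any:
  assumes fin: "finite U" and v: "1 \<le> v" and leg: "v - 1 \<in> U \<or> v + 1 \<in> U"
  shows "\<exists>L a c. (L = a + c + 2 \<or> (L = a + c + 1 \<and> (a = 0 \<or> c = 0))) \<and>
     (\<forall>f. f 0 = 0 \<longrightarrow> Phi f (U - {v-1, v+1}) + f L = Phi f U + f a + f c)"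
proof (cases "v - 1 \<in> U")
  case l: True
  show ?thesis
  proof (cases "v + 1 \<in> U")
    case True
    obtain j where j: "\<forall>t\<le>j. v + 1 + 2*t \<in> U" "v + 1 + 2*(j+1) \<notin> U"
      using exists_j[OF fin True] by blast
    have "dd U (v-1) \<ge> 1" using l by (rule dd_pos)
    then show ?thesis using move_both[OF fin v l j]
      by (intro exI[of _ "dd U (v-1) + j + 1"] exI[of _ "dd U (v-1) - 1"] exI[of _ j]) auto
  next
    case False
    have "dd U (v-1) \<ge> 1" using l by (rule dd_pos)
    then show ?thesis using move_left[OF fin v l False]
      by (intro exI[of _ "dd U (v-1)"] exI[of _ "dd U (v-1) - 1"] exI[of _ 0]) auto
  qed
next
  case False
  then have r: "v + 1 \<in> U" using leg by auto
  obtain j where j: "\<forall>t\<le>j. v + 1 + 2*t \<in> U" "v + 1 + 2*(j+1) \<notin> U"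
    using exists_j[OF fin r] by blast
  show ?thesis using move_right[OF fin v False j]
    by (intro exI[of _ "1 + j"] exI[of _ 0] exI[of _ j]) auto
qed



definition FF :: "bool \<Rightarrow> nat set \<Rightarrow> nat" where
  "FF d U = Phi bf U + (if d then Phi qf U div 2 else (Phi qf U + 1) div 2)"

definition UT :: "nat \<Rightarrow> nat set \<Rightarrow> nat set" where "UT n T = {1..n} - T"

lemma bf00: "bf 0 = 0" "qf 0 = 0" by (simp_all add: bf_def qf_def)

lemma every_move_FF:
  assumes "finite U" "1 \<le> v" "v - 1 \<in> U \<or> v + 1 \<in> U"
  shows "FF True U \<le> Suc (FF False (U - {v-1, v+1}))" "Suc (FF True (U - {v-1, v+1})) \<le> FF False U"
proof -
  obtain L a c where sh: "L = a + c + 2 \<or> (L = a + c + 1 \<and> (a = 0 \<or> c = 0))"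
    and ph: "\<forall>f. f 0 = 0 \<longrightarrow> Phi f (U - {v-1, v+1}) + f L = Phi f U + f a + f c"
    using move_any[OF assms] by blast
  have e1: "Phi bf (U - {v-1, v+1}) + bf L = Phi bf U + bf a + bf c" using mp[OF spec[OF ph, of bf] bf00(1)] .
  have e2: "Phi qf (U - {v-1, v+1}) + qf L = Phi qf U + qf a + qf c" using mp[OF spec[OF ph, of qf] bf00(2)] .
  show "FF True U \<le> Suc (FF False (U - {v-1, v+1}))" "Suc (FF True (U - {v-1, v+1})) \<le> FF False U"
    using AR1[OF e1 e2 sh] unfolding FF_def by simp_all
qed

lemma ends_sub: "ends U \<subseteq> U" unfolding ends_def by auto

lemma end_exists: "finite U \<Longrightarrow> U \<noteq> {} \<Longrightarrow> \<exists>e. e \<in> ends U"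
  using Max_in[of U] Max_ge[of U] unfolding ends_def
  by (metis (no_types, lifting) le_add1 mem_Collect_eq not_le less_add_same_cancel1 zero_less_numeral)

lemma end_good:
  assumes "finite U" "U \<noteq> {}"
  shows "\<exists>e\<in>ends U. (Phi qf U > 0 \<longrightarrow> qf (dd U e) = 1)"
proof (cases "Phi qf U > 0")
  case True
  then obtain e where "e \<in> ends U" "qf (dd U e) \<noteq> 0" unfolding Phi_def
    by (metis (no_types, lifting) not_gr_zero sum.neutral)
  then show ?thesis by (auto simp: qf_def split: if_splits)
next
  case False
  then show ?thesis using end_exists[OF assms] by auto
qed

lemma S_exists:
  assumes n: "even n" "2 \<le> n" and U: "U \<subseteq> {1..n}" "U \<noteq> {}"
  shows "\<exists>v\<in>{1..n}. (v - 1 \<in> U \<or> v + 1 \<in> U) \<and> FF False U \<le> Suc (FF True (U - {v-1, v+1}))"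
proof -
  have fin: "finite U" using U finite_subset by blast
  obtain e where eE: "e \<in> ends U" and eq: "Phi qf U > 0 \<longrightarrow> qf (dd U e) = 1"
    using end_good[OF fin U(2)] by auto
  have eU: "e \<in> U" "e + 2 \<notin> U" using eE unfolding ends_def by auto
  define L where "L = dd U e"
  have L1: "L \<ge> 1" using eU dd_pos unfolding L_def by blast
  have key: "\<exists>v\<in>{1..n}. (v - 1 \<in> U \<or> v + 1 \<in> U) \<and>
     (\<forall>f. f 0 = 0 \<longrightarrow> Phi f (U - {v-1, v+1}) + f L = Phi f U + f (L - 1))"
  proof (cases "e + 1 \<le> n")
    case True
    have m: "1 \<le> e + 1" "e + 1 - 1 \<in> U" "e + 1 + 1 \<notin> U" using eU by auto
    have "\<forall>f. f 0 = 0 \<longrightarrow> Phi f (U - {e + 1 - 1, e + 1 + 1}) + f (dd U (e + 1 - 1)) = Phi f U + f (dd U (e + 1 - 1) - 1)"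
      using move_left[OF fin m] by blast
    then have "\<forall>f. f 0 = 0 \<longrightarrow> Phi f (U - {e + 1 - 1, e + 1 + 1}) + f L = Phi f U + f (L - 1)"
      unfolding L_def by simp
    moreover have "e + 1 \<in> {1..n}" using True by simp
    ultimately show ?thesis using m(2) by blast
  next
    case False
    then have en: "e = n" using eU U by auto
    define s where "s = e - 2*(L-1)"
    have c1: "2*(L-1) \<le> e" "s \<in> U" using dd_chain[of "L-1" U e] L1 unfolding L_def s_def by auto
    have "s \<ge> 1" using c1 U by auto
    moreover have "even s" using n c1 en unfolding s_def by auto
    ultimately have s2: "s \<ge> 2" by presburger
    have br: "s - 2 \<notin> U"
    proof -
      have "2 * dd U e \<le> e" using s2 c1 unfolding s_def L_def by auto
      then have "e - 2 * dd U e \<notin> U" using dd_break[of U e] L1 unfolding L_def by auto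
      moreover have "e - 2 * dd U e = s - 2" using s2 c1 L1 unfolding s_def L_def by auto
      ultimately show ?thesis by simp
    qed
    define v where "v = s - 1"
    have v: "1 \<le> v" "v \<le> n" "v - 1 = s - 2" "v + 1 = s" using s2 c1 U unfolding v_def by auto
    have hj: "\<forall>t\<le>L-1. v + 1 + 2*t \<in> U"
    proof (intro allI impI)
      fix t assume t: "t \<le> L - 1"
      have "L - 1 - t < dd U e" using L1 t unfolding L_def by auto
      then have "e - 2*(L-1-t) \<in> U" using dd_chain by blast
      moreover have "e - 2*(L-1-t) = v + 1 + 2*t"
      proof -
        have hX: "2*(L-1) = 2*(L-1-t) + 2*t" using t by simp
        obtain d where ed: "e = 2*(L-1) + d" using le_Suc_ex[OF c1(1)] by blast
        have "v + 1 = d" using v(4) unfolding s_def ed by simp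
        then show ?thesis unfolding ed hX by simp
      qed
      ultimately show "v + 1 + 2*t \<in> U" by simp
    qed
    have "v + 1 + 2*(L-1+1) = e + 2"
    proof -
      have "v + 1 = e - 2*(L-1)" using v(4) unfolding s_def .
      then have "v + 1 + 2*(L-1) = e" using c1(1) by simp
      then show ?thesis by simp
    qed
    then have hj2: "v + 1 + 2*(L-1+1) \<notin> U" using eU by simp
    have br': "v - 1 \<notin> U" using br v(3) by simp
    have "\<forall>f. f 0 = 0 \<longrightarrow> Phi f (U - {v-1, v+1}) + f (1 + (L-1)) = Phi f U + f (L-1)"
      using move_right[OF fin v(1) br' hj hj2] by blast
    moreover have "1 + (L - 1) = L" using L1 by simp
    moreover have "v \<in> {1..n}" "v + 1 \<in> U" using v c1 by auto
    ultimately show ?thesis by (intro bexI[of _ v] conjI) auto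
  qed
  then obtain v where v: "v \<in> {1..n}" "v - 1 \<in> U \<or> v + 1 \<in> U"
    and ph: "\<forall>f. f 0 = 0 \<longrightarrow> Phi f (U - {v-1, v+1}) + f L = Phi f U + f (L - 1)" by blast
  have e1: "Phi bf (U - {v-1, v+1}) + bf L = Phi bf U + bf (L-1) + bf 0" using mp[OF spec[OF ph, of bf] bf00(1)] bf00 by simp
  have e2: "Phi qf (U - {v-1, v+1}) + qf L = Phi qf U + qf (L-1) + qf 0" using mp[OF spec[OF ph, of qf] bf00(2)] bf00 by simp
  have "FF False U \<le> Suc (FF True (U - {v-1, v+1}))"
    using AR_S[OF e1 e2 L1] eq unfolding FF_def L_def by simp
  then show ?thesis using v by blast
qed

lemma D_exists:
  assumes n: "2 \<le> n" and U: "U \<subseteq> {1..n}" "U \<noteq> {}"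
  shows "\<exists>v\<in>{1..n}. (v - 1 \<in> U \<or> v + 1 \<in> U) \<and> Suc (FF False (U - {v-1, v+1})) \<le> FF True U"
proof -
  have fin: "finite U" using U finite_subset by blast
  obtain e where eE: "e \<in> ends U" and eq: "Phi qf U > 0 \<longrightarrow> qf (dd U e) = 1"
    using end_good[OF fin U(2)] by auto
  have eU: "e \<in> U" "e + 2 \<notin> U" using eE unfolding ends_def by auto
  define L where "L = dd U e"
  have L1: "L \<ge> 1" using eU dd_pos unfolding L_def by blast
  have key: "\<exists>v\<in>{1..n}. (v - 1 \<in> U \<or> v + 1 \<in> U) \<and> (\<exists>a. ((L \<ge> 2 \<and> a = L - 2) \<or> (L = 1 \<and> a = 0)) \<and>
     (\<forall>f. f 0 = 0 \<longrightarrow> Phi f (U - {v-1, v+1}) + f L = Phi f U + f a + f 0))"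
  proof (cases "L \<ge> 2")
    case True
    have c: "2 \<le> e" "e - 2 \<in> U" "dd U (e-2) = L - 1" using dd_chain[of 1 U e] True unfolding L_def by auto
    have "e - 2 \<ge> 1" using c(2) U(1) by auto
    then have e3: "e \<ge> 3" using c(1) by arith
    define v where "v = e - 1"
    have v: "1 \<le> v" "v \<le> n" "v - 1 = e - 2" "v + 1 = e" using e3 eU U unfolding v_def by auto
    have hj: "\<forall>t\<le>0. v + 1 + 2*t \<in> U" "v + 1 + 2*(0+1) \<notin> U" using v eU by auto
    have v1: "v - 1 \<in> U" using c v by simp
    have "\<forall>f. f 0 = 0 \<longrightarrow> Phi f (U - {v-1, v+1}) + f (dd U (v-1) + 0 + 1) = Phi f U + f (dd U (v-1) - 1) + f 0"
      using move_both[OF fin v(1) v1 hj] by blast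
    moreover have "dd U (v-1) + 0 + 1 = L" "dd U (v-1) - 1 = L - 2" using c v True by auto
    ultimately have "\<forall>f. f 0 = 0 \<longrightarrow> Phi f (U - {v-1, v+1}) + f L = Phi f U + f (L - 2) + f 0" by simp
    moreover have "v \<in> {1..n}" using v by simp
    ultimately show ?thesis using v1 True by blast
  next
    case False
    then have L1': "L = 1" using L1 by auto
    show ?thesis
    proof (cases "e + 1 \<le> n")
      case True
      have m: "1 \<le> e + 1" "e + 1 - 1 \<in> U" "e + 1 + 1 \<notin> U" using eU by auto
      have "\<forall>f. f 0 = 0 \<longrightarrow> Phi f (U - {e + 1 - 1, e + 1 + 1}) + f (dd U (e + 1 - 1)) = Phi f U + f (dd U (e + 1 - 1) - 1)"
        using move_left[OF fin m] by blast
      then have "\<forall>f. f 0 = 0 \<longrightarrow> Phi f (U - {e + 1 - 1, e + 1 + 1}) + f L = Phi f U + f 0 + f 0"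
        using L1' unfolding L_def by simp
      moreover have "e + 1 \<in> {1..n}" using True by simp
      ultimately show ?thesis using m(2) L1' by blast
    next
      case False
      then have en: "e = n" using eU U by auto
      have br: "e - 2 \<notin> U" using dd_break[of U e] L1' n en unfolding L_def by auto
      define v where "v = e - 1"
      have v: "1 \<le> v" "v \<le> n" "v - 1 = e - 2" "v + 1 = e" using n en unfolding v_def by auto
      have hj: "\<forall>t\<le>0. v + 1 + 2*t \<in> U" "v + 1 + 2*(0+1) \<notin> U" using v eU by auto
      have br': "v - 1 \<notin> U" using br v(3) by simp
      have "\<forall>f. f 0 = 0 \<longrightarrow> Phi f (U - {v-1, v+1}) + f (1 + 0) = Phi f U + f 0"
        using move_right[OF fin v(1) br' hj] by blast
      then have "\<forall>f. f 0 = 0 \<longrightarrow> Phi f (U - {v-1, v+1}) + f L = Phi f U + f 0 + f 0"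
        using L1' by simp
      moreover have "v \<in> {1..n}" "v + 1 \<in> U" using v eU by auto
      ultimately show ?thesis using L1' by blast
    qed
  qed
  then obtain v a where v: "v \<in> {1..n}" "v - 1 \<in> U \<or> v + 1 \<in> U"
    and sh: "(L \<ge> 2 \<and> a = L - 2) \<or> (L = 1 \<and> a = 0)"
    and ph: "\<forall>f. f 0 = 0 \<longrightarrow> Phi f (U - {v-1, v+1}) + f L = Phi f U + f a + f 0" by blast
  have e1: "Phi bf (U - {v-1, v+1}) + bf L = Phi bf U + bf a + bf 0" using mp[OF spec[OF ph, of bf] bf00(1)] .
  have e2: "Phi qf (U - {v-1, v+1}) + qf L = Phi qf U + qf a + qf 0" using mp[OF spec[OF ph, of qf] bf00(2)] .
  have "odd (Phi qf U) \<longrightarrow> qf L = 1" using eq unfolding L_def by (auto intro: odd_pos)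
  then have "Suc (FF False (U - {v-1, v+1})) \<le> FF True U"
    using AR_D[OF e1 e2 sh] unfolding FF_def by simp
  then show ?thesis using v by blast
qed



lemma nbhd_path: "v \<in> {1..n} \<Longrightarrow> open_nbhd {1..n} path_adj v = {1..n} \<inter> {v-1, v+1}"
  unfolding open_nbhd_def path_adj_def by auto

lemma UT_move: "v \<in> {1..n} \<Longrightarrow> UT n (T \<union> open_nbhd {1..n} path_adj v) = UT n T - {v-1, v+1}"
  unfolding UT_def using nbhd_path[of v n] by auto

lemma legal_iff: "tdg_legal {1..n} path_adj T v \<longleftrightarrow> v \<in> {1..n} \<and> (v - 1 \<in> UT n T \<or> v + 1 \<in> UT n T)"
proof (cases "v \<in> {1..n}")
  case True
  show ?thesis unfolding tdg_legal_def nbhd_path[OF True] UT_def using True by (auto simp: subset_iff)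
next
  case False then show ?thesis unfolding tdg_legal_def by auto
qed

lemma UT_fin: "finite (UT n T)" unfolding UT_def by simp
lemma UT_sub: "UT n T \<subseteq> {1..n}" unfolding UT_def by auto

lemma legal_exists:
  assumes "2 \<le> n" "UT n T \<noteq> {}"
  shows "\<exists>v. tdg_legal {1..n} path_adj T v"
proof -
  obtain x where x: "x \<in> UT n T" using assms by auto
  then have x1: "1 \<le> x" "x \<le> n" unfolding UT_def by auto
  show ?thesis
  proof (cases "x + 1 \<le> n")
    case True
    then show ?thesis using x x1 unfolding legal_iff by (intro exI[of _ "x+1"]) auto
  next
    case False
    then have "x = n" using x1 by simp
    then have "x - 1 + 1 = x" "x - 1 \<in> {1..n}" using assms x1 by auto
    then show ?thesis using x unfolding legal_iff by (intro exI[of _ "x-1"]) auto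
  qed
qed

lemma FF_empty: "FF d {} = 0"
  unfolding FF_def Phi_def ends_def by simp

lemma val_suc: "tdg_val V E (Suc k) d T =
  (if {v. tdg_legal V E T v} = {} then 0
   else if d then Min ((\<lambda>v. Suc (tdg_val V E k False (T \<union> open_nbhd V E v))) ` {v. tdg_legal V E T v})
   else Max ((\<lambda>v. Suc (tdg_val V E k True (T \<union> open_nbhd V E v))) ` {v. tdg_legal V E T v}))"
  by simp

lemma val_suc_ne:
  assumes "{v. tdg_legal V E T v} \<noteq> {}"
  shows "tdg_val V E (Suc k) d T =
   (if d then Min ((\<lambda>v. Suc (tdg_val V E k False (T \<union> open_nbhd V E v))) ` {v. tdg_legal V E T v})
   else Max ((\<lambda>v. Suc (tdg_val V E k True (T \<union> open_nbhd V E v))) ` {v. tdg_legal V E T v}))"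
  unfolding tdg_val.simps(2) by (simp only: if_not_P[OF assms])

lemma legal_fin: "finite {v. tdg_legal {1..n} path_adj T v}"
  by (rule finite_subset[of _ "{1..n}"]) (auto simp: tdg_legal_def)

lemma upper:
  assumes n: "2 \<le> n"
  shows "tdg_val {1..n} path_adj k d T \<le> FF d (UT n T)"
proof (induction k arbitrary: d T)
  case 0 then show ?case by simp
next
  case (Suc k)
  define M where "M = {v. tdg_legal {1..n} path_adj T v}"
  define U where "U = UT n T"
  show ?case
  proof (cases "M = {}")
    case True then show ?thesis unfolding M_def by simp
  next
    case Mne: False
    have finM: "finite M" unfolding M_def by (rule legal_fin)
    have Une: "U \<noteq> {}" using Mne unfolding M_def U_def legal_iff by auto
    show ?thesis
    proof (cases d)
      case True
      obtain v where v: "v \<in> {1..n}" "v - 1 \<in> U \<or> v + 1 \<in> U"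
        and le: "Suc (FF False (U - {v-1, v+1})) \<le> FF True U"
        using D_exists[OF n UT_sub Une[unfolded U_def]] unfolding U_def by blast
      have vM: "v \<in> M" unfolding M_def legal_iff using v unfolding U_def by auto
      have "tdg_val {1..n} path_adj (Suc k) d T
          = Min ((\<lambda>v. Suc (tdg_val {1..n} path_adj k False (T \<union> open_nbhd {1..n} path_adj v))) ` M)"
        using Mne unfolding M_def by (subst val_suc_ne) (simp_all add: True)
      also have "\<dots> \<le> Suc (tdg_val {1..n} path_adj k False (T \<union> open_nbhd {1..n} path_adj v))"
        using finM vM by simp
      also have "\<dots> \<le> Suc (FF False (UT n (T \<union> open_nbhd {1..n} path_adj v)))"
        using Suc.IH by simp
      also have "\<dots> = Suc (FF False (U - {v-1, v+1}))" using UT_move[OF v(1)] unfolding U_def by simp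
      also have "\<dots> \<le> FF True U" by (rule le)
      finally show ?thesis using True unfolding U_def by simp
    next
      case False
      have "Max ((\<lambda>v. Suc (tdg_val {1..n} path_adj k True (T \<union> open_nbhd {1..n} path_adj v))) ` M) \<le> FF False U"
      proof (subst Max_le_iff)
        show "finite ((\<lambda>v. Suc (tdg_val {1..n} path_adj k True (T \<union> open_nbhd {1..n} path_adj v))) ` M)"
          using finM by simp
        show "(\<lambda>v. Suc (tdg_val {1..n} path_adj k True (T \<union> open_nbhd {1..n} path_adj v))) ` M \<noteq> {}"
          using Mne by simp
        show "\<forall>a\<in>(\<lambda>v. Suc (tdg_val {1..n} path_adj k True (T \<union> open_nbhd {1..n} path_adj v))) ` M. a \<le> FF False U"
        proof
          fix a assume "a \<in> (\<lambda>v. Suc (tdg_val {1..n} path_adj k True (T \<union> open_nbhd {1..n} path_adj v))) ` M"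
          then obtain v where vM: "v \<in> M" and a: "a = Suc (tdg_val {1..n} path_adj k True (T \<union> open_nbhd {1..n} path_adj v))"
            by blast
          have v: "v \<in> {1..n}" "v - 1 \<in> U \<or> v + 1 \<in> U" using vM unfolding M_def legal_iff U_def by auto
          have "a \<le> Suc (FF True (UT n (T \<union> open_nbhd {1..n} path_adj v)))" using Suc.IH a by simp
          also have "\<dots> = Suc (FF True (U - {v-1, v+1}))" using UT_move[OF v(1)] unfolding U_def by simp
          also have "\<dots> \<le> FF False U" using every_move_FF(2)[of U v] UT_fin v unfolding U_def by auto
          finally show "a \<le> FF False U" .
        qed
      qed
      moreover have "{v. tdg_legal {1..n} path_adj T v} \<noteq> {}" using Mne unfolding M_def .
      ultimately show ?thesis unfolding U_def M_def by (subst val_suc_ne) (simp_all add: False)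
    qed
  qed
qed

lemma card_move:
  assumes "v - 1 \<in> U \<or> v + 1 \<in> U" "finite U"
  shows "card (U - {v-1, v+1}) < card U"
  using assms by (intro psubset_card_mono) auto

lemma lower:
  assumes n: "even n" "2 \<le> n"
  shows "card (UT n T) \<le> k \<Longrightarrow> FF d (UT n T) \<le> tdg_val {1..n} path_adj k d T"
proof (induction k arbitrary: d T)
  case 0
  then have "UT n T = {}" using UT_fin by simp
  then show ?case by (simp add: FF_empty)
next
  case (Suc k)
  define M where "M = {v. tdg_legal {1..n} path_adj T v}"
  define U where "U = UT n T"
  show ?case
  proof (cases "M = {}")
    case True
    then have "U = {}" using legal_exists[OF n(2)] unfolding M_def U_def by auto
    then show ?thesis unfolding U_def by (simp add: FF_empty)
  next
    case Mne: False
    have finM: "finite M" unfolding M_def by (rule legal_fin)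
    have Une: "U \<noteq> {}" using Mne unfolding M_def U_def legal_iff by auto
    have IHv: "FF d' (U - {v-1, v+1}) \<le> tdg_val {1..n} path_adj k d' (T \<union> open_nbhd {1..n} path_adj v)"
      if "v \<in> M" for v d'
    proof -
      have v: "v \<in> {1..n}" "v - 1 \<in> U \<or> v + 1 \<in> U" using that unfolding M_def legal_iff U_def by auto
      have "card (U - {v-1, v+1}) < card U" using card_move[OF v(2)] UT_fin unfolding U_def by blast
      then have "card (UT n (T \<union> open_nbhd {1..n} path_adj v)) \<le> k"
        using Suc.prems UT_move[OF v(1)] unfolding U_def by simp
      then have "FF d' (UT n (T \<union> open_nbhd {1..n} path_adj v)) \<le> tdg_val {1..n} path_adj k d' (T \<union> open_nbhd {1..n} path_adj v)"
        by (rule Suc.IH)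
      then show ?thesis using UT_move[OF v(1)] unfolding U_def by simp
    qed
    show ?thesis
    proof (cases d)
      case True
      have "FF True U \<le> Min ((\<lambda>v. Suc (tdg_val {1..n} path_adj k False (T \<union> open_nbhd {1..n} path_adj v))) ` M)"
      proof (subst Min_ge_iff)
        show "finite ((\<lambda>v. Suc (tdg_val {1..n} path_adj k False (T \<union> open_nbhd {1..n} path_adj v))) ` M)"
          using finM by simp
        show "(\<lambda>v. Suc (tdg_val {1..n} path_adj k False (T \<union> open_nbhd {1..n} path_adj v))) ` M \<noteq> {}"
          using Mne by simp
        show "\<forall>a\<in>(\<lambda>v. Suc (tdg_val {1..n} path_adj k False (T \<union> open_nbhd {1..n} path_adj v))) ` M. FF True U \<le> a"
        proof
          fix a assume "a \<in> (\<lambda>v. Suc (tdg_val {1..n} path_adj k False (T \<union> open_nbhd {1..n} path_adj v))) ` M"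
          then obtain v where vM: "v \<in> M" and a: "a = Suc (tdg_val {1..n} path_adj k False (T \<union> open_nbhd {1..n} path_adj v))"
            by blast
          have v: "v \<in> {1..n}" "v - 1 \<in> U \<or> v + 1 \<in> U" using vM unfolding M_def legal_iff U_def by auto
          have "FF True U \<le> Suc (FF False (U - {v-1, v+1}))"
            using every_move_FF(1)[of U v] UT_fin v unfolding U_def by auto
          also have "\<dots> \<le> a" using IHv[OF vM, of False] a by simp
          finally show "FF True U \<le> a" .
        qed
      qed
      moreover have "{v. tdg_legal {1..n} path_adj T v} \<noteq> {}" using Mne unfolding M_def .
      ultimately show ?thesis unfolding U_def M_def by (subst val_suc_ne) (simp_all add: True)
    next
      case False
      obtain v where v: "v \<in> {1..n}" "v - 1 \<in> U \<or> v + 1 \<in> U"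
        and le: "FF False U \<le> Suc (FF True (U - {v-1, v+1}))"
        using S_exists[OF n UT_sub Une[unfolded U_def]] unfolding U_def by blast
      have vM: "v \<in> M" unfolding M_def legal_iff using v unfolding U_def by auto
      have "FF False U \<le> Suc (FF True (U - {v-1, v+1}))" by (rule le)
      also have "\<dots> \<le> Suc (tdg_val {1..n} path_adj k True (T \<union> open_nbhd {1..n} path_adj v))"
        using IHv[OF vM, of True] by simp
      also have "\<dots> \<le> Max ((\<lambda>v. Suc (tdg_val {1..n} path_adj k True (T \<union> open_nbhd {1..n} path_adj v))) ` M)"
        using finM vM by simp
      also have "\<dots> = tdg_val {1..n} path_adj (Suc k) d T"
        using Mne unfolding M_def by (subst val_suc_ne) (simp_all add: False)
      finally show ?thesis unfolding U_def using False by simp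
    qed
  qed
qed

lemma dd_full: "x \<le> n \<Longrightarrow> dd {1..n} x = (x + 1) div 2"
proof (induction x rule: less_induct)
  case (less x)
  show ?case
  proof (cases "x = 0")
    case True then show ?thesis by (simp add: dd_notin)
  next
    case False
    then have xin: "x \<in> {1..n}" using less.prems by simp
    show ?thesis
    proof (cases "2 \<le> x")
      case True
      then have "dd {1..n} (x-2) = (x - 2 + 1) div 2" using less by simp
      then show ?thesis using xin True by (simp add: dd_in)
    next
      case False
      then have "x = 1" using xin by simp
      then show ?thesis using xin by (simp add: dd_in)
    qed
  qed
qed

lemma ends_full: "2 \<le> n \<Longrightarrow> ends {1..n} = {n-1, n}"
  unfolding ends_def by auto

lemma Phi_full:
  assumes "even n" "2 \<le> n"
  shows "Phi f {1..n} = 2 * f (n div 2)"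
proof -
  have "dd {1..n} (n-1) = n div 2" "dd {1..n} n = n div 2"
    using dd_full[of "n-1" n] dd_full[of n n] assms by (auto elim!: evenE)
  moreover have "n - 1 \<noteq> n" using assms by simp
  ultimately show ?thesis unfolding Phi_def ends_full[OF assms(2)] by simp
qed

lemma Phi_pd:
  assumes n: "even n" "2 \<le> n" and v: "v \<in> {1..n}" and f0: "f 0 = 0"
  shows "Phi f ({1..n} - {v}) + f (n div 2) = 2 * f (n div 2) + f ((v+1) div 2 - 1) + f ((n - v) div 2)"
proof -
  have hj: "\<forall>t\<le>(n-v) div 2. v + 2*t \<in> {1..n}" using v by auto
  have hj2: "v + 2*((n-v) div 2 + 1) \<notin> {1..n}" using v by auto
  have "Phi f ({1..n} - {v}) + f (dd {1..n} v + (n-v) div 2) = Phi f {1..n} + f (dd {1..n} v - 1) + f ((n-v) div 2)"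
    by (rule remove_one[where U="{1..n}" and x=v and j="(n-v) div 2" and f=f, OF _ v hj hj2 f0]) simp
  moreover have "dd {1..n} v = (v+1) div 2" using dd_full v by auto
  moreover have "(v+1) div 2 + (n-v) div 2 = n div 2" using n v by auto
  ultimately show ?thesis using Phi_full[OF n] by simp
qed



theorem corollary3p7:
  fixes n :: nat
  assumes "n \<ge> 2" and "n mod 6 \<in> {2, 4}"
  shows "tg_critical {1..n} path_adj"
proof -
  have ev: "even n" using assms(2) by auto presburger+
  have m3: "n div 2 mod 3 = 1 \<or> n div 2 mod 3 = 2" using assms(2) by auto presburger+
  have g: "FF True {1..n} \<le> gamma_tg {1..n} path_adj"
  proof -
    have "FF True (UT n {}) \<le> tdg_val {1..n} path_adj n True {}"
      by (rule lower[OF ev assms(1)]) (simp add: UT_def)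
    then show ?thesis unfolding gamma_tg_def UT_def by simp
  qed
  show ?thesis unfolding tg_critical_def
  proof
    fix v assume v: "v \<in> {1..n}"
    have p: "gamma_tg_pd {1..n} path_adj v \<le> FF True ({1..n} - {v})"
      using upper[OF assms(1), of n True "{v}"] unfolding gamma_tg_pd_def UT_def by simp
    define m where "m = n div 2"
    define a where "a = (v+1) div 2 - 1"
    define c where "c = (n - v) div 2"
    have ac: "a + c + 1 = m" using v ev unfolding a_def c_def m_def by auto
    have e1: "Phi bf ({1..n} - {v}) + bf m = 2 * bf m + bf a + bf c"
      using Phi_pd[OF ev assms(1) v, of bf] bf00 unfolding a_def c_def m_def by simp
    have e2: "Phi qf ({1..n} - {v}) + qf m = 2 * qf m + qf a + qf c"
      using Phi_pd[OF ev assms(1) v, of qf] bf00 unfolding a_def c_def m_def by simp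
    have "FF True ({1..n} - {v}) < FF True {1..n}"
      using AR_final[OF e1 e2 ac m3[folded m_def]] unfolding FF_def Phi_full[OF ev assms(1)] m_def by simp
    then show "gamma_tg_pd {1..n} path_adj v < gamma_tg {1..n} path_adj" using p g by linarith
  qed
qed


end
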